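(* Let $n\geqslant 3$, let $S$ be a caterpillar species tree with $n$ leaves and let $G$ be a caterpillar gene tree on the same label set that differs from $S$ by a nearest-neighbor-interchange (NNI) move. Then (i) the roadblock set $B_{G,S}$ consists of a single point $(i,i)$ for some $i$ with $1\leqslant i\leqslant n-2$; and (ii) the number of coalescent histories for $(G,S)$ is $C_{n-1}-C_iC_{n-1-i}$, where $C_m=\frac{1}{m+1}\binom{2m}{m}$.
   Context: All trees are binary, rooted, leaf-labeled. A caterpillar tree with $n$ leaves is one in which some internal node is descended from all other internal nodes. Its canonical label vector $(x_1,\dots,x_n)$ has $x_1,x_2$ the labels of the two leaves of the cherry (unique internal node with two descendant leaves) and, for $3\leqslant i\leqslant n$, $x_i$ the label of the leaf separated from the root by $n-i+1$ edges; vectors differing only by swapping $x_1,x_2$ describe the same tree. $G$ and $S$ differ by an NNI move if the canonical vector of $S$ is obtained from that of $G$ by exchanging the labels in positions $\{k,k+1\}$ for some $2\leqslant k\leqslant n-1$, or in positions $\{1,3\}$. Internal nodes are numbered $1,\dots,n-1$ from cherry to root; internal edge $i$ is the edge above node $i$, with an extra edge $n-1$ above the root. A coalescent history for $(G,S)$ is a map $h$ from internal nodes of $G$ to internal edges of $S$ such that (1) every label of a leaf below node $v$ of $G$ labels a leaf of $S$ below edge $h(v)$, and (2) if $v_2$ is descended from $v_1$ in $G$ then $h(v_2)$ is descended from $h(v_1)$ (objects are descended from themselves). With $\mathbf g,\mathbf s$ the canonical vectors of $G,S$, $\sigma(x)$ the index of $x$ in $\mathbf s$ and $F(j)=\max\{\sigma(g_1),\dots,\sigma(g_{j+1})\}-1$,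 the roadblock set is $B_{G,S}=\{(i,j)\in\mathbb Z^2:1\leqslant j\leqslant i\leqslant n-1,\ i<F(j)\}$. *)

theory Defs
  imports "HOL-Library.FuncSet" "HOL-Combinatorics.Transposition"
begin

text \<open>A caterpillar tree with n leaves is represented by a canonical label vector
  x :: nat => 'a, with positions 1..n (x 1, x 2 the cherry labels; x i for i >= 3 the
  leaf at distance n-i+1 from the root). Internal node j (1 <= j <= n-1, numbered from
  cherry to root) has below it exactly the leaves labelled x 1, ..., x (j+1); internal
  edge j is the edge above node j (edge n-1 above the root).\<close>

definition cat_vector :: "nat \<Rightarrow> (nat \<Rightarrow> 'a) \<Rightarrow> bool" where
  "cat_vector n x \<longleftrightarrow> inj_on x {1..n}"

definition same_cat :: "nat \<Rightarrow> (nat \<Rightarrow> 'a) \<Rightarrow> (nat \<Rightarrow> 'a) \<Rightarrow> bool" where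
  "same_cat n x y \<longleftrightarrow> (\<forall>i\<in>{1..n}. y i = x i) \<or> (\<forall>i\<in>{1..n}. y i = x (transpose 1 2 i))"

definition nni_cat :: "nat \<Rightarrow> (nat \<Rightarrow> 'a) \<Rightarrow> (nat \<Rightarrow> 'a) \<Rightarrow> bool" where
  "nni_cat n g s \<longleftrightarrow> (\<exists>g' s'. same_cat n g g' \<and> same_cat n s s' \<and>
     ((\<exists>k. 2 \<le> k \<and> k \<le> n - 1 \<and> (\<forall>i\<in>{1..n}. s' i = g' (transpose k (k+1) i)))
      \<or> (\<forall>i\<in>{1..n}. s' i = g' (transpose 1 3 i))))"

text \<open>Coalescent histories for caterpillars (G with vector g, S with vector s):
  maps h from internal nodes {1..n-1} of G to internal edges {1..n-1} of S such that
  (1) the leaf labels below node v of G label leaves of S below edge h v, and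
  (2) if v2 is descended from v1 in G (v2 <= v1) then h v2 is descended from h v1
      (h v2 <= h v1).\<close>
definition coal_histories :: "nat \<Rightarrow> (nat \<Rightarrow> 'a) \<Rightarrow> (nat \<Rightarrow> 'a) \<Rightarrow> (nat \<Rightarrow> nat) set" where
  "coal_histories n g s = {h \<in> {1..n-1} \<rightarrow>\<^sub>E {1..n-1}.
      (\<forall>v\<in>{1..n-1}. g ` {1..v+1} \<subseteq> s ` {1..h v + 1}) \<and>
      (\<forall>v1\<in>{1..n-1}. \<forall>v2\<in>{1..n-1}. v2 \<le> v1 \<longrightarrow> h v2 \<le> h v1)}"

definition sigma_idx :: "nat \<Rightarrow> (nat \<Rightarrow> 'a) \<Rightarrow> 'a \<Rightarrow> nat" where
  "sigma_idx n s x = (THE i. i \<in> {1..n} \<and> s i = x)"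

definition F_fun :: "nat \<Rightarrow> (nat \<Rightarrow> 'a) \<Rightarrow> (nat \<Rightarrow> 'a) \<Rightarrow> nat \<Rightarrow> nat" where
  "F_fun n g s j = Max ((\<lambda>x. sigma_idx n s x) ` g ` {1..j+1}) - 1"

definition roadblock :: "nat \<Rightarrow> (nat \<Rightarrow> 'a) \<Rightarrow> (nat \<Rightarrow> 'a) \<Rightarrow> (nat \<times> nat) set" where
  "roadblock n g s = {(i, j). 1 \<le> j \<and> j \<le> i \<and> i \<le> n - 1 \<and> i < F_fun n g s j}"

definition catalan :: "nat \<Rightarrow> nat" where
  "catalan m = (2 * m choose m) div (m + 1)"

end

theory Submission
  imports Defs
begin

definition SS :: "(nat \<Rightarrow> nat) \<Rightarrow> nat \<Rightarrow> nat \<Rightarrow> (nat \<Rightarrow> nat) set" where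
"SS F k c = {h \<in> {1..k} \<rightarrow>\<^sub>E {1..c}. (\<forall>v\<in>{1..k}. F v \<le> h v) \<and>
   (\<forall>v1\<in>{1..k}. \<forall>v2\<in>{1..k}. v2 \<le> v1 \<longrightarrow> h v2 \<le> h v1)}"

fun cnt :: "(nat \<Rightarrow> nat) \<Rightarrow> nat \<Rightarrow> nat \<Rightarrow> nat" where
"cnt F 0 c = 1" | "cnt F (Suc k) c = (\<Sum>x\<in>{max 1 (F (Suc k))..c}. cnt F k x)"

lemma SS_0: "SS F 0 c = {\<lambda>_. undefined}"
  unfolding SS_def by auto

lemma finite_SS: "finite (SS F k c)"
  unfolding SS_def by (rule finite_subset[of _ "{1..k} \<rightarrow>\<^sub>E {1..c}"]) (auto intro: finite_PiE)

lemma SS_Suc: "SS F (Suc k) c = (\<Union>x\<in>{max 1 (F (Suc k))..c}. (\<lambda>h. h(Suc k := x)) ` SS F k x)"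
proof
  show "SS F (Suc k) c \<subseteq> (\<Union>x\<in>{max 1 (F (Suc k))..c}. (\<lambda>h. h(Suc k := x)) ` SS F k x)"
  proof
    fix h assume h: "h \<in> SS F (Suc k) c"
    define x where "x = h (Suc k)"
    have x: "x \<in> {max 1 (F (Suc k))..c}" using h unfolding SS_def x_def by auto
    have "h(Suc k := undefined) \<in> SS F k x"
      using h unfolding SS_def x_def
      by (auto simp: PiE_iff extensional_def)
    moreover have "h = (h(Suc k := undefined))(Suc k := x)" by (simp add: x_def)
    ultimately show "h \<in> (\<Union>x\<in>{max 1 (F (Suc k))..c}. (\<lambda>h. h(Suc k := x)) ` SS F k x)"
      using x by blast
  qed
next
  show "(\<Union>x\<in>{max 1 (F (Suc k))..c}. (\<lambda>h. h(Suc k := x)) ` SS F k x) \<subseteq> SS F (Suc k) c"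
  proof clarify
    fix x h assume x: "x \<in> {max 1 (F (Suc k))..c}" and h: "h \<in> SS F k x"
    have hP: "h \<in> {1..k} \<rightarrow>\<^sub>E {1..x}" and hF: "\<forall>v\<in>{1..k}. F v \<le> h v"
      and hM: "\<forall>v1\<in>{1..k}. \<forall>v2\<in>{1..k}. v2 \<le> v1 \<longrightarrow> h v2 \<le> h v1"
      using h unfolding SS_def by auto
    have p1: "h(Suc k := x) \<in> {1..Suc k} \<rightarrow>\<^sub>E {1..c}"
    proof (rule PiE_I)
      fix v assume "v \<in> {1..Suc k}"
      then show "(h(Suc k := x)) v \<in> {1..c}" using hP x
      proof (cases "v = Suc k")
        case False
        then have "v \<in> {1..k}" using \<open>v \<in> {1..Suc k}\<close> by auto
        then have "h v \<in> {1..x}" using hP by auto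
        then show ?thesis using False x by auto
      qed auto
    next
      fix v assume "v \<notin> {1..Suc k}"
      then show "(h(Suc k := x)) v = undefined" using hP by (auto simp: PiE_iff extensional_def)
    qed
    have p2: "\<forall>v\<in>{1..Suc k}. F v \<le> (h(Suc k := x)) v"
    proof
      fix v assume "v \<in> {1..Suc k}"
      then show "F v \<le> (h(Suc k := x)) v" using hF x by (cases "v = Suc k") auto
    qed
    have p3: "\<forall>v1\<in>{1..Suc k}. \<forall>v2\<in>{1..Suc k}. v2 \<le> v1 \<longrightarrow> (h(Suc k := x)) v2 \<le> (h(Suc k := x)) v1"
    proof (intro ballI impI)
      fix v1 v2 assume v: "v1 \<in> {1..Suc k}" "v2 \<in> {1..Suc k}" "v2 \<le> v1"
      show "(h(Suc k := x)) v2 \<le> (h(Suc k := x)) v1"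
      proof (cases "v1 = Suc k")
        case True
        then show ?thesis using v hP by (cases "v2 = Suc k") (auto simp: PiE_iff)
      next
        case False
        then have "v2 \<noteq> Suc k" "v1 \<in> {1..k}" "v2 \<in> {1..k}" using v by auto
        then show ?thesis using hM v by auto
      qed
    qed
    show "h(Suc k := x) \<in> SS F (Suc k) c"
      unfolding SS_def using p1 p2 p3 by blast
  qed
qed

lemma card_SS: "card (SS F k c) = cnt F k c"
proof (induction k arbitrary: c)
  case 0 then show ?case by (simp add: SS_0)
next
  case (Suc k)
  have inj: "inj_on (\<lambda>h. h(Suc k := x)) (SS F k x)" for x
  proof (rule inj_onI)
    fix h1 h2 assume "h1 \<in> SS F k x" "h2 \<in> SS F k x" "h1(Suc k := x) = h2(Suc k := x)"
    then have e: "h1(Suc k := x) = h2(Suc k := x)" and p1: "h1 \<in> {1..k} \<rightarrow>\<^sub>E {1..x}" and p2: "h2 \<in> {1..k} \<rightarrow>\<^sub>E {1..x}"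
      unfolding SS_def by auto
    have u: "h1 (Suc k) = h2 (Suc k)" using PiE_arb[OF p1, of "Suc k"] PiE_arb[OF p2, of "Suc k"] by simp
    show "h1 = h2"
    proof (rule ext)
      fix y show "h1 y = h2 y" using fun_cong[OF e, of y] u by (cases "y = Suc k") auto
    qed
  qed
  have "card (SS F (Suc k) c) = (\<Sum>x\<in>{max 1 (F (Suc k))..c}. card ((\<lambda>h. h(Suc k := x)) ` SS F k x))"
    unfolding SS_Suc
  proof (rule card_UN_disjoint)
    show "\<forall>i\<in>{max 1 (F (Suc k))..c}. \<forall>j\<in>{max 1 (F (Suc k))..c}. i \<noteq> j \<longrightarrow>
      (\<lambda>h. h(Suc k := i)) ` SS F k i \<inter> (\<lambda>h. h(Suc k := j)) ` SS F k j = {}"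
    proof (intro ballI impI)
      fix x y :: nat assume "x \<noteq> y"
      have "h1(Suc k := x) \<noteq> h2(Suc k := y)" for h1 h2 :: "nat \<Rightarrow> nat"
        using \<open>x \<noteq> y\<close> by (metis fun_upd_same)
      then show "(\<lambda>h. h(Suc k := x)) ` SS F k x \<inter> (\<lambda>h. h(Suc k := y)) ` SS F k y = {}" by blast
    qed
  qed (auto simp: finite_SS)
  also have "\<dots> = (\<Sum>x\<in>{max 1 (F (Suc k))..c}. cnt F k x)"
    by (rule sum.cong) (auto simp: card_image[OF inj] Suc.IH)
  finally show ?case by simp
qed

definition D :: "nat \<Rightarrow> nat \<Rightarrow> nat" where "D k c = cnt (\<lambda>v. v) k c"

lemma D_0 [simp]: "D 0 c = 1" by (simp add: D_def)
lemma D_Suc: "D (Suc k) c = (\<Sum>x\<in>{Suc k..c}. D k x)" by (simp add: D_def)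

lemma D_closed: "k \<le> Suc c \<Longrightarrow> D k c + (k + c choose Suc c) = (k + c choose c)"
proof (induction k arbitrary: c)
  case 0 then show ?case by simp
next
  case (Suc k)
  from Suc.prems have "k \<le> c" by simp
  then show ?case
  proof (induction c rule: dec_induct)
    case base
    have "D (Suc k) k = 0" by (simp add: D_Suc)
    moreover have "(Suc k + k choose Suc k) = (Suc k + k choose k)"
      using binomial_symmetric[of k "Suc k + k"] by simp
    ultimately show ?case by simp
  next
    case (step c)
    have e: "D (Suc k) (Suc c) = D (Suc k) c + D k (Suc c)" using step.hyps by (simp add: D_Suc)
    have i1: "D k (Suc c) + (k + Suc c choose Suc (Suc c)) = (k + Suc c choose Suc c)"
      using Suc.IH[of "Suc c"] step by simp
    show ?case using e i1 step.IH by simp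
  qed
qed

lemma D_cat: "D k k = catalan k"
proof -
  have a: "D k k + (2*k choose Suc k) = (2*k choose k)" using D_closed[of k k] by (simp add: mult_2)
  have b1: "Suc k * (2*k choose Suc k) = 2*k * ((2*k - 1) choose k)" by (rule binomial_absorption)
  have b2: "(2*k - k) * (2*k choose k) = 2*k*((2*k-1) choose k)" by (rule binomial_absorb_comp)
  have b3: "2*k - k = k" by simp
  have b2': "k * (2*k choose k) = 2*k*((2*k-1) choose k)" using b2 b3 by metis
  have b: "Suc k * (2*k choose Suc k) = k * (2*k choose k)"
    using b1 b2' by metis
  have "Suc k * D k k = (2*k choose k)"
  proof -
    have "Suc k * D k k + Suc k * (2*k choose Suc k) = Suc k * (2*k choose k)"
      using a by (metis distrib_left)
    then show ?thesis using b by simp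
  qed
  then show ?thesis unfolding catalan_def by (metis Suc_eq_plus1 nonzero_mult_div_cancel_left nat.simps(3))
qed

definition Fi :: "nat \<Rightarrow> nat \<Rightarrow> nat" where "Fi i v = (if v = i then Suc i else v)"

lemma cnt_Fi_less: "k < i \<Longrightarrow> cnt (Fi i) k c = D k c"
  by (induction k arbitrary: c) (auto simp: D_def Fi_def intro!: sum.cong)

lemma cnt_Fi: assumes "1 \<le> i" "i \<le> k" shows "k \<le> c \<Longrightarrow> cnt (Fi i) k c + D i i * D (k - i) (c - i) = D k c"
  using assms(2)
proof (induction k arbitrary: c rule: dec_induct)
  case base
  obtain j where j: "i = Suc j" using assms(1) by (cases i) auto
  have "cnt (Fi i) i c = (\<Sum>x\<in>{Suc (Suc j)..c}. D j x)"
    using j by (auto simp: Fi_def cnt_Fi_less intro!: sum.cong)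
  moreover have "D i c = D j (Suc j) + (\<Sum>x\<in>{Suc (Suc j)..c}. D j x)"
    using j base by (simp add: D_Suc sum.atLeast_Suc_atMost)
  moreover have "D i i = D j (Suc j)" using j by (simp add: D_Suc)
  ultimately show ?case by simp
next
  case (step m)
  have c0: "cnt (Fi i) (Suc m) c = (\<Sum>x\<in>{Suc m..c}. cnt (Fi i) m x)"
    using step by (simp add: Fi_def)
  have s1: "(\<Sum>x\<in>{Suc m..c}. cnt (Fi i) m x + D i i * D (m - i) (x - i)) = D (Suc m) c"
    unfolding D_Suc
  proof (rule sum.cong[OF refl])
    fix x assume "x \<in> {Suc m..c}"
    then show "cnt (Fi i) m x + D i i * D (m - i) (x - i) = D m x" using step.IH[of x] by simp
  qed
  have "(\<Sum>x\<in>{Suc m..c}. D (m - i) (x - i)) = (\<Sum>x\<in>{Suc (m - i) + i..(c - i) + i}. D (m - i) (x - i))"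
    using step by simp
  also have "\<dots> = (\<Sum>y\<in>{Suc (m - i)..c - i}. D (m - i) y)"
    by (subst sum.shift_bounds_cl_nat_ivl) simp
  also have "\<dots> = D (Suc m - i) (c - i)" using step by (simp add: D_Suc Suc_diff_le)
  finally have s2: "(\<Sum>x\<in>{Suc m..c}. D (m - i) (x - i)) = D (Suc m - i) (c - i)" .
  have s3: "(\<Sum>x\<in>{Suc m..c}. cnt (Fi i) m x + D i i * D (m - i) (x - i)) =
     (\<Sum>x\<in>{Suc m..c}. cnt (Fi i) m x) + D i i * (\<Sum>x\<in>{Suc m..c}. D (m - i) (x - i))"
    by (simp add: sum.distrib sum_distrib_left)
  show ?case using s1 s2 s3 c0 by simp
qed


lemma sig_q:
  assumes inj: "inj_on s {1..n}" and q: "\<forall>x\<in>{1..n}. q x \<in> {1..n} \<and> g x = s (q x)"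
    and x: "x \<in> {1..n}"
  shows "sigma_idx n s (g x) = q x"
  unfolding sigma_idx_def
proof (rule the_equality)
  show "q x \<in> {1..n} \<and> s (q x) = g x" using q x by auto
next
  fix y assume "y \<in> {1..n} \<and> s y = g x"
  then have "s y = s (q x)" "y \<in> {1..n}" "q x \<in> {1..n}" using q x by auto
  then show "y = q x" using inj_onD[OF inj] by blast
qed

lemma final:
  assumes n3: "3 \<le> n" and inj: "inj_on s {1..n}"
    and q: "\<forall>x\<in>{1..n}. q x \<in> {1..n} \<and> g x = s (q x)"
    and PQ: "\<forall>j\<in>{1..n-1}. q ` {1..j+1} \<subseteq> {1..Fi i j + 1} \<and> Fi i j + 1 \<in> q ` {1..j+1}"
    and i: "1 \<le> i" "i \<le> n - 2"
  shows "roadblock n g s = {(i, i)} \<and>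
         card (coal_histories n g s) = catalan (n - 1) - catalan i * catalan (n - 1 - i)"
proof -
  have Ff: "F_fun n g s j = Fi i j" if j: "j \<in> {1..n-1}" for j
  proof -
    have "(\<lambda>x. sigma_idx n s x) ` g ` {1..j+1} = q ` {1..j+1}"
      unfolding image_image
      by (rule image_cong[OF refl]) (rule sig_q[OF inj q], use j in auto)
    moreover have "Max (q ` {1..j+1}) = Fi i j + 1"
    proof (rule Max_eqI)
      have sub: "q ` {1..j+1} \<subseteq> {1..Fi i j + 1}" using PQ j by blast
      fix y assume "y \<in> q ` {1..j+1}"
      then show "y \<le> Fi i j + 1" using sub by auto
    next
      show "Fi i j + 1 \<in> q ` {1..j+1}" using PQ j by blast
    qed auto
    ultimately show ?thesis unfolding F_fun_def by simp
  qed
  have cond: "g ` {1..v+1} \<subseteq> s ` {1..t+1} \<longleftrightarrow> Fi i v \<le> t"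
    if v: "v \<in> {1..n-1}" and t: "t \<in> {1..n-1}" for v t
  proof
    assume sub: "g ` {1..v+1} \<subseteq> s ` {1..t+1}"
    have "Fi i v + 1 \<in> q ` {1..v+1}" using PQ v by blast
    then obtain x0 where x0: "x0 \<in> {1..v+1}" "q x0 = Fi i v + 1" by (metis imageE)
    have "g x0 \<in> s ` {1..t+1}" using sub x0 by auto
    then obtain y where y: "y \<in> {1..t+1}" "g x0 = s y" by auto
    have "x0 \<in> {1..n}" using x0 v by auto
    then have "s (q x0) = s y" "q x0 \<in> {1..n}" using q y by auto
    moreover have "y \<in> {1..n}" using y t by auto
    ultimately have "q x0 = y" using inj_onD[OF inj] by blast
    then show "Fi i v \<le> t" using x0 y by auto
  next
    assume le: "Fi i v \<le> t"
    show "g ` {1..v+1} \<subseteq> s ` {1..t+1}"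
    proof
      fix z assume "z \<in> g ` {1..v+1}"
      then obtain x where x: "x \<in> {1..v+1}" "z = g x" by auto
      have "x \<in> {1..n}" using x v by auto
      then have "z = s (q x)" "q x \<ge> 1" using q x by auto
      moreover have "q x \<le> t + 1"
      proof -
        have "q ` {1..v+1} \<subseteq> {1..Fi i v + 1}" using PQ v by blast
        then have "q x \<in> {1..Fi i v + 1}" using x by blast
        then show ?thesis using le by simp
      qed
      ultimately show "z \<in> s ` {1..t+1}" by auto
    qed
  qed
  have coal: "coal_histories n g s = SS (Fi i) (n-1) (n-1)"
    unfolding coal_histories_def SS_def
  proof (rule Collect_cong)
    fix h
    show "(h \<in> {1..n - 1} \<rightarrow>\<^sub>E {1..n - 1} \<and>
          (\<forall>v\<in>{1..n - 1}. g ` {1..v + 1} \<subseteq> s ` {1..h v + 1}) \<and>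
          (\<forall>v1\<in>{1..n - 1}. \<forall>v2\<in>{1..n - 1}. v2 \<le> v1 \<longrightarrow> h v2 \<le> h v1)) =
         (h \<in> {1..n - 1} \<rightarrow>\<^sub>E {1..n - 1} \<and>
          (\<forall>v\<in>{1..n - 1}. Fi i v \<le> h v) \<and>
          (\<forall>v1\<in>{1..n - 1}. \<forall>v2\<in>{1..n - 1}. v2 \<le> v1 \<longrightarrow> h v2 \<le> h v1))"
    proof (cases "h \<in> {1..n - 1} \<rightarrow>\<^sub>E {1..n - 1}")
      case True
      then have "h v \<in> {1..n-1}" if "v \<in> {1..n-1}" for v using that by auto
      then have "(\<forall>v\<in>{1..n - 1}. g ` {1..v + 1} \<subseteq> s ` {1..h v + 1}) = (\<forall>v\<in>{1..n - 1}. Fi i v \<le> h v)"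
        by (intro ball_cong[OF refl] cond) auto
      then show ?thesis by simp
    qed simp
  qed
  have rb: "roadblock n g s = {(i, i)}"
  proof
    show "roadblock n g s \<subseteq> {(i, i)}"
    proof clarify
      fix a b assume "(a, b) \<in> roadblock n g s"
      then have ab: "1 \<le> b" "b \<le> a" "a \<le> n - 1" "a < F_fun n g s b" unfolding roadblock_def by auto
      then have "a < Fi i b" using Ff[of b] by auto
      then show "a = i \<and> b = i" using ab by (auto simp: Fi_def split: if_splits)
    qed
  next
    have "F_fun n g s i = Suc i" using Ff[of i] i by (auto simp: Fi_def)
    then show "{(i, i)} \<subseteq> roadblock n g s" unfolding roadblock_def using i by auto
  qed
  have "card (coal_histories n g s) + D i i * D (n - 1 - i) (n - 1 - i) = D (n-1) (n-1)"
    unfolding coal card_SS using cnt_Fi[of i "n-1" "n-1"] i by simp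
  then have "card (coal_histories n g s) = catalan (n - 1) - catalan i * catalan (n - 1 - i)"
    by (simp add: D_cat)
  with rb show ?thesis by simp
qed


lemma ab_facts:
  assumes "a = id \<or> a = transpose (1::nat) 2"
  shows "x \<in> {1..m} \<Longrightarrow> 2 \<le> m \<Longrightarrow> a x \<in> {1..m}"
    and "a (a x) = x"
    and "2 \<le> m \<Longrightarrow> a ` {1..m} = {1..m}"
    and "3 \<le> x \<Longrightarrow> a x = x"
  using assms by (auto simp: transpose_def)

lemma core:
  assumes n3: "3 \<le> n" and inj: "inj_on s {1..n}"
    and a: "a = id \<or> a = transpose (1::nat) 2" and b: "b = id \<or> b = transpose (1::nat) 2"
    and t: "(\<tau> = transpose k (k+1) \<and> 2 \<le> k \<and> k \<le> n-1 \<and> i = k-1) \<or> (\<tau> = transpose 1 3 \<and> i = 1)"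
    and sg: "\<forall>x\<in>{1..n}. s (b x) = g (a (\<tau> x))"
  shows "1 \<le> i \<and> i \<le> n - 2 \<and> roadblock n g s = {(i, i)} \<and>
         card (coal_histories n g s) = catalan (n - 1) - catalan i * catalan (n - 1 - i)"
proof -
  have i: "1 \<le> i" "i \<le> n - 2" using t n3 by auto
  have tr: "\<tau> x \<in> {1..n}" if "x \<in> {1..n}" for x
    using t that n3 by (auto simp: transpose_def)
  have ti: "\<tau> (\<tau> x) = x" for x using t by auto
  define q where "q x = b (\<tau> (a x))" for x
  have q: "\<forall>x\<in>{1..n}. q x \<in> {1..n} \<and> g x = s (q x)"
  proof
    fix x assume x: "x \<in> {1..n}"
    have ax: "a x \<in> {1..n}" using ab_facts(1)[OF a x] n3 by auto
    have y: "\<tau> (a x) \<in> {1..n}" using tr[OF ax] .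
    have "q x \<in> {1..n}" unfolding q_def using ab_facts(1)[OF b y] n3 by auto
    moreover have "s (q x) = g x" unfolding q_def using sg y ti ab_facts(2)[OF a] by metis
    ultimately show "q x \<in> {1..n} \<and> g x = s (q x)" by simp
  qed
  have PQ: "\<forall>j\<in>{1..n-1}. q ` {1..j+1} \<subseteq> {1..Fi i j + 1} \<and> Fi i j + 1 \<in> q ` {1..j+1}"
  proof
    fix j assume j: "j \<in> {1..n-1}"
    have "q ` {1..j+1} = (\<lambda>x. b (\<tau> x)) ` (a ` {1..j+1})"
      unfolding q_def by (simp add: image_image)
    also have "a ` {1..j+1} = {1..j+1}" using ab_facts(3)[OF a, of "j+1"] j by simp
    finally have qi: "q ` {1..j+1} = b ` \<tau> ` {1..j+1}" by (simp add: image_image)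
    show "q ` {1..j+1} \<subseteq> {1..Fi i j + 1} \<and> Fi i j + 1 \<in> q ` {1..j+1}"
    proof (cases "j = i")
      case False
      have "\<tau> ` {1..j+1} = {1..j+1}"
        using t
      proof (elim disjE conjE)
        assume A: "\<tau> = transpose k (k+1)" "2 \<le> k" "k \<le> n-1" "i = k-1"
        then have "k \<in> {1..j+1} \<longleftrightarrow> k+1 \<in> {1..j+1}" using False by auto
        then show ?thesis unfolding A(1) by (rule transpose_image_eq)
      next
        assume B: "\<tau> = transpose 1 3" "i = 1"
        then have "1 \<in> {1..j+1} \<longleftrightarrow> 3 \<in> {1..j+1}" using False j by auto
        then show ?thesis unfolding B(1) by (rule transpose_image_eq)
      qed
      then have "q ` {1..j+1} = {1..j+1}" using qi ab_facts(3)[OF b, of "j+1"] j by simp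
      then show ?thesis using False by (simp add: Fi_def)
    next
      case True
      have sub: "\<tau> ` {1..j+1} \<subseteq> {1..j+2}" using t True j by (auto simp: transpose_def)
      have "b ` \<tau> ` {1..j+1} \<subseteq> b ` {1..j+2}" using sub by (rule image_mono)
      also have "\<dots> = {1..j+2}" using ab_facts(3)[OF b, of "j+2"] by simp
      finally have s1: "q ` {1..j+1} \<subseteq> {1..Fi i j + 1}" using qi True by (simp add: Fi_def)
      have "j + 2 = b (\<tau> (\<tau> (j+2)))" using ti ab_facts(4)[OF b, of "j+2"] j by simp
      moreover have "\<tau> (j+2) \<in> {1..j+1}"
        using t True by (auto simp: transpose_def)
      ultimately have "j + 2 \<in> b ` \<tau> ` {1..j+1}" by blast
      then have "j + 2 \<in> q ` {1..j+1}" unfolding qi .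
      then show ?thesis using s1 True by (simp add: Fi_def)
    qed
  qed
  show ?thesis using final[OF n3 inj q PQ i] i by simp
qed


lemma same_cat_ab:
  assumes "same_cat n x y"
  obtains a where "a = id \<or> a = transpose (1::nat) 2" "\<forall>i\<in>{1..n}. y i = x (a i)"
  using assms unfolding same_cat_def by (metis id_apply)

theorem proposition5:
  fixes n :: nat and g s :: "nat \<Rightarrow> 'a"
  assumes "n \<ge> 3"
    and "cat_vector n s" and "cat_vector n g"
    and "g ` {1..n} = s ` {1..n}"
    and "nni_cat n g s"
  shows "\<exists>i. 1 \<le> i \<and> i \<le> n - 2 \<and> roadblock n g s = {(i, i)} \<and>
           card (coal_histories n g s) = catalan (n - 1) - catalan i * catalan (n - 1 - i)"
proof -
  have inj: "inj_on s {1..n}" using assms(2) unfolding cat_vector_def .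
  obtain g' s' where gg: "same_cat n g g'" and ss: "same_cat n s s'"
    and mv: "(\<exists>k. 2 \<le> k \<and> k \<le> n - 1 \<and> (\<forall>i\<in>{1..n}. s' i = g' (transpose k (k+1) i)))
      \<or> (\<forall>i\<in>{1..n}. s' i = g' (transpose 1 3 i))"
    using assms(5) unfolding nni_cat_def by blast
  obtain a where a: "a = id \<or> a = transpose (1::nat) 2" "\<forall>i\<in>{1..n}. g' i = g (a i)"
    using same_cat_ab[OF gg] by blast
  obtain b where b: "b = id \<or> b = transpose (1::nat) 2" "\<forall>i\<in>{1..n}. s' i = s (b i)"
    using same_cat_ab[OF ss] by blast
  from mv show ?thesis
  proof (elim disjE exE conjE)
    fix k assume k: "2 \<le> k" "k \<le> n - 1" and e: "\<forall>i\<in>{1..n}. s' i = g' (transpose k (k+1) i)"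
    have sg: "\<forall>x\<in>{1..n}. s (b x) = g (a (transpose k (k+1) x))"
    proof
      fix x assume x: "x \<in> {1..n}"
      have "transpose k (k+1) x \<in> {1..n}" using x k by (auto simp: transpose_def)
      then show "s (b x) = g (a (transpose k (k+1) x))" using a(2) b(2) e x by metis
    qed
    show ?thesis
      using core[OF assms(1) inj a(1) b(1) _ sg, of k "k-1"] k by blast
  next
    assume e: "\<forall>i\<in>{1..n}. s' i = g' (transpose 1 3 i)"
    have sg: "\<forall>x\<in>{1..n}. s (b x) = g (a (transpose 1 3 x))"
    proof
      fix x assume x: "x \<in> {1..n}"
      have "transpose 1 3 x \<in> {1..n}" using x assms(1) by (auto simp: transpose_def)
      then show "s (b x) = g (a (transpose 1 3 x))" using a(2) b(2) e x by metis
    qed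
    show ?thesis
      using core[OF assms(1) inj a(1) b(1) _ sg, of _ 1] by blast
  qed
qed

end
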